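(* Let $A\in\mathbb{C}^{n\times n}$ be Hermitian, $\beta>0$, $f(\mathbf{z})=\frac12\mathbf{z}^*A\mathbf{z}+\frac{\beta}{2}\sum_k|z_k|^4$, and let $\mathbf{z}\in\mathbb{CS}^{n-1}$ be a stationary point of $\min_{\mathbf{z}\in\mathbb{CS}^{n-1}}f(\mathbf{z})$. Then $\mathbf{z}$ is a global minimizer of $f$ on $\mathbb{CS}^{n-1}$ if and only if (i) $H_f(\mathbf{z})[\mathbf{v}]\ge0$ and $2H_3(\mathbf{v})^2\le H_f(\mathbf{z})[\mathbf{v}]\cdot[f(\mathbf{v})-f(\mathbf{z})]$ for all $\mathbf{v}\in\mathcal{T}_{\mathbf{z}}\cap\mathbb{CS}^{n-1}$, and (ii) $H_3(\mathbf{v})=0$ and $H_4(\mathbf{v})\ge0$ for all $\mathbf{v}\in\mathcal{T}_{\mathbf{z}}\cap\mathbb{CS}^{n-1}$ with $H_f(\mathbf{z})[\mathbf{v}]=0$.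
   Context: $\mathbb{CS}^{n-1}$ is the unit sphere of $\mathbb{C}^n$. Stationarity means $[A+2\beta\,\mathrm{diag}(|\mathbf{z}|^2)]\mathbf{z}=2\lambda\mathbf{z}$ with $\lambda=\frac12\mathbf{z}^*A\mathbf{z}+\beta\|\mathbf{z}\|_4^4$, where $|\mathbf{z}|^2=(|z_1|^2,\dots,|z_n|^2)$. $\mathcal{T}_{\mathbf{z}}=\{\mathbf{v}\in\mathbb{C}^n:\mathrm{Re}(\mathbf{v}^*\mathbf{z})=0\}$. $H_f(\mathbf{z})[\mathbf{v}]=\mathbf{v}^*[A+2\beta\,\mathrm{diag}(|\mathbf{z}|^2)-2\lambda I]\mathbf{v}+4\beta\sum_k\mathrm{Re}(v_k\bar z_k)^2$, $H_3(\mathbf{v})=\beta\sum_k(|v_k|^2-|z_k|^2)\mathrm{Re}(\bar z_kv_k)$, $H_4(\mathbf{v})=\beta\sum_k[(|v_k|^2-|z_k|^2)^2-4\mathrm{Re}(\bar z_kv_k)^2]$. *)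

theory Defs
  imports "HOL-Analysis.Analysis"
begin

definition hermitian :: "complex ^ 'n ^ 'n \<Rightarrow> bool" where
  "hermitian A \<longleftrightarrow> (\<forall>i j. A $ i $ j = cnj (A $ j $ i))"

definition qform :: "complex ^ 'n ^ 'n \<Rightarrow> complex ^ 'n \<Rightarrow> complex ^ 'n \<Rightarrow> complex" where
  "qform M v w = (\<Sum>i\<in>UNIV. \<Sum>j\<in>UNIV. cnj (v $ i) * M $ i $ j * w $ j)"

definition cinner :: "complex ^ 'n \<Rightarrow> complex ^ 'n \<Rightarrow> complex" where
  "cinner v w = (\<Sum>k\<in>UNIV. cnj (v $ k) * w $ k)"

definition csphere :: "(complex ^ 'n) set" where
  "csphere = {z. (\<Sum>k\<in>UNIV. (cmod (z $ k))\<^sup>2) = 1}"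

definition norm4_4 :: "complex ^ 'n \<Rightarrow> real" where
  "norm4_4 z = (\<Sum>k\<in>UNIV. (cmod (z $ k)) ^ 4)"

text \<open>f(z) = 1/2 z^* A z + beta/2 sum |z_k|^4  (real-valued for Hermitian A).\<close>
definition fobj :: "complex ^ 'n ^ 'n \<Rightarrow> real \<Rightarrow> complex ^ 'n \<Rightarrow> real" where
  "fobj A \<beta> z = Re (qform A z z) / 2 + \<beta> / 2 * norm4_4 z"

definition lam :: "complex ^ 'n ^ 'n \<Rightarrow> real \<Rightarrow> complex ^ 'n \<Rightarrow> real" where
  "lam A \<beta> z = Re (qform A z z) / 2 + \<beta> * norm4_4 z"

definition Amod :: "complex ^ 'n ^ 'n \<Rightarrow> real \<Rightarrow> complex ^ 'n \<Rightarrow> complex ^ 'n ^ 'n" where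
  "Amod A \<beta> z = (\<chi> i j. A $ i $ j + (if i = j then of_real (2 * \<beta> * (cmod (z $ i))\<^sup>2) else 0))"

definition stationary :: "complex ^ 'n ^ 'n \<Rightarrow> real \<Rightarrow> complex ^ 'n \<Rightarrow> bool" where
  "stationary A \<beta> z \<longleftrightarrow> z \<in> csphere \<and>
     (\<forall>i. (\<Sum>j\<in>UNIV. Amod A \<beta> z $ i $ j * z $ j) = of_real (2 * lam A \<beta> z) * z $ i)"

definition tangent :: "complex ^ 'n \<Rightarrow> (complex ^ 'n) set" where
  "tangent z = {v. Re (cinner v z) = 0}"

definition Hf :: "complex ^ 'n ^ 'n \<Rightarrow> real \<Rightarrow> complex ^ 'n \<Rightarrow> complex ^ 'n \<Rightarrow> real" where
  "Hf A \<beta> z v = Re (qform (Amod A \<beta> z) v v) - 2 * lam A \<beta> z * (\<Sum>k\<in>UNIV. (cmod (v $ k))\<^sup>2)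
     + 4 * \<beta> * (\<Sum>k\<in>UNIV. (Re (v $ k * cnj (z $ k)))\<^sup>2)"

definition H3 :: "real \<Rightarrow> complex ^ 'n \<Rightarrow> complex ^ 'n \<Rightarrow> real" where
  "H3 \<beta> z v = \<beta> * (\<Sum>k\<in>UNIV. ((cmod (v $ k))\<^sup>2 - (cmod (z $ k))\<^sup>2) * Re (cnj (z $ k) * v $ k))"

definition H4 :: "real \<Rightarrow> complex ^ 'n \<Rightarrow> complex ^ 'n \<Rightarrow> real" where
  "H4 \<beta> z v = \<beta> * (\<Sum>k\<in>UNIV. ((cmod (v $ k))\<^sup>2 - (cmod (z $ k))\<^sup>2)\<^sup>2
                               - 4 * (Re (cnj (z $ k) * v $ k))\<^sup>2)"

definition global_min_on_sphere :: "complex ^ 'n ^ 'n \<Rightarrow> real \<Rightarrow> complex ^ 'n \<Rightarrow> bool" where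
  "global_min_on_sphere A \<beta> z \<longleftrightarrow> z \<in> csphere \<and> (\<forall>w\<in>csphere. fobj A \<beta> z \<le> fobj A \<beta> w)"

end

theory Submission
  imports Defs
begin


lemma cmod_comb:
  "(cmod (of_real c * x + of_real s * y))^2 = c^2 * (cmod x)^2 + s^2 * (cmod y)^2 + 2 * c * s * Re (cnj x * y)"
proof -
  have "(cmod (of_real c * x + of_real s * y))^2 = (c * Re x + s * Re y)^2 + (c * Im x + s * Im y)^2"
    by (simp add: cmod_power2)
  also have "\<dots> = c^2 * (cmod x)^2 + s^2 * (cmod y)^2 + 2 * c * s * Re (cnj x * y)"
    unfolding cmod_power2 by (simp add: power2_eq_square algebra_simps)
  finally show ?thesis .
qed

lemma qform_add1: "qform M (x + y) w = qform M x w + qform M y w"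
  by (simp add: qform_def algebra_simps sum.distrib)
lemma qform_add2: "qform M w (x + y) = qform M w x + qform M w y"
  by (simp add: qform_def algebra_simps sum.distrib)
lemma qform_scale1: "qform M (c *\<^sub>R x) w = of_real c * qform M x w"
  unfolding qform_def vector_scaleR_component scaleR_conv_of_real[where 'a=complex]
  by (simp add: algebra_simps sum_distrib_left)
lemma qform_scale2: "qform M w (c *\<^sub>R x) = of_real c * qform M w x"
  unfolding qform_def vector_scaleR_component scaleR_conv_of_real[where 'a=complex]
  by (simp add: algebra_simps sum_distrib_left)

lemma qform_herm:
  assumes "hermitian A" shows "cnj (qform A v z) = qform A z v"
proof -
  have "cnj (qform A v z) = (\<Sum>i\<in>UNIV. \<Sum>j\<in>UNIV. v $ i * cnj (A $ i $ j) * cnj (z $ j))"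
    by (simp add: qform_def cnj_sum)
  also have "\<dots> = (\<Sum>j\<in>UNIV. \<Sum>i\<in>UNIV. v $ i * cnj (A $ i $ j) * cnj (z $ j))"
    by (rule sum.swap)
  also have "\<dots> = qform A z v"
  proof -
    have h: "cnj (A $ i $ j) = A $ j $ i" for i j
      using assms unfolding hermitian_def by metis
    show ?thesis unfolding qform_def h by (intro sum.cong refl) (simp add: mult_ac)
  qed
  finally show ?thesis .
qed

lemma Re_cnj_comm: "Re (cnj x * y) = Re (cnj y * x)"
  by simp

lemma key:
  fixes A :: "complex ^ 'n ^ 'n" and z v :: "complex ^ 'n"
  assumes herm: "hermitian A" and st: "stationary A \<beta> z" and vt: "v \<in> tangent z"
    and vs: "v \<in> csphere" and cs: "c^2 + s^2 = 1"
  shows "fobj A \<beta> (c *\<^sub>R z + s *\<^sub>R v) - fobj A \<beta> z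
     = s^2/2 * (c^2 * Hf A \<beta> z v + 4 * c * s * H3 \<beta> z v + 2 * s^2 * (fobj A \<beta> v - fobj A \<beta> z))
     \<and> H4 \<beta> z v = 2 * (fobj A \<beta> v - fobj A \<beta> z) - Hf A \<beta> z v"
proof -
  define w where "w = c *\<^sub>R z + s *\<^sub>R v"
  define a where "a k = (cmod (z $ k))^2" for k
  define b where "b k = (cmod (v $ k))^2" for k
  define r where "r k = Re (cnj (z $ k) * v $ k)" for k
  define Sab where "Sab = (\<Sum>k\<in>UNIV. a k * b k)"
  define Saa where "Saa = (\<Sum>k\<in>UNIV. a k * a k)"
  define Sbb where "Sbb = (\<Sum>k\<in>UNIV. b k * b k)"
  define Srr where "Srr = (\<Sum>k\<in>UNIV. r k * r k)"
  define Sar where "Sar = (\<Sum>k\<in>UNIV. a k * r k)"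
  define Sbr where "Sbr = (\<Sum>k\<in>UNIV. b k * r k)"
  define la where "la = lam A \<beta> z"
  define Qz where "Qz = Re (qform A z z)"
  define Qv where "Qv = Re (qform A v v)"
  define Qvz where "Qvz = Re (qform A v z)"
  have wk: "w $ k = of_real c * z $ k + of_real s * v $ k" for k
    unfolding w_def vector_add_component vector_scaleR_component scaleR_conv_of_real[where 'a=complex] ..
  have wk2: "(cmod (w $ k))^2 = c^2 * a k + s^2 * b k + 2 * c * s * r k" for k
    unfolding wk a_def b_def r_def by (rule cmod_comb)
  have n4w: "norm4_4 w = c^4 * Saa + s^4 * Sbb + 4 * c^2 * s^2 * Srr + 2 * c^2 * s^2 * Sab + 4 * c^3 * s * Sar + 4 * c * s^3 * Sbr"
  proof -
    have "norm4_4 w = (\<Sum>k\<in>UNIV. (c^2 * a k + s^2 * b k + 2 * c * s * r k)^2)"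
      unfolding norm4_4_def by (intro sum.cong refl) (simp flip: wk2)
    also have "\<dots> = (\<Sum>k\<in>UNIV. c^4 * (a k * a k) + s^4 * (b k * b k) + 4 * c^2 * s^2 * (r k * r k)
        + 2 * c^2 * s^2 * (a k * b k) + 4 * c^3 * s * (a k * r k) + 4 * c * s^3 * (b k * r k))"
      by (intro sum.cong refl) (simp add: power2_eq_square power3_eq_cube power4_eq_xxxx algebra_simps)
    also have "\<dots> = c^4 * Saa + s^4 * Sbb + 4 * c^2 * s^2 * Srr + 2 * c^2 * s^2 * Sab + 4 * c^3 * s * Sar + 4 * c * s^3 * Sbr"
      unfolding Saa_def Sbb_def Srr_def Sab_def Sar_def Sbr_def
      by (simp add: sum.distrib sum_distrib_left)
    finally show ?thesis .
  qed
  have n4z: "norm4_4 z = Saa"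
    unfolding norm4_4_def Saa_def a_def by (intro sum.cong refl) (simp add: power4_eq_xxxx power2_eq_square)
  have n4v: "norm4_4 v = Sbb"
    unfolding norm4_4_def Sbb_def b_def by (intro sum.cong refl) (simp add: power4_eq_xxxx power2_eq_square)
  have Qw: "Re (qform A w w) = c^2 * Qz + s^2 * Qv + 2 * c * s * Qvz"
  proof -
    have "Re (qform A z v) = Qvz"
      unfolding Qvz_def using arg_cong[OF qform_herm[OF herm, of v z], of Re] by simp
    have rm: "Re (complex_of_real x * y) = x * Re y" for x y by simp
    have "qform A w w = of_real (c * c) * qform A z z + of_real (c * s) * (qform A z v + qform A v z)
        + of_real (s * s) * qform A v v"
      unfolding w_def qform_add1 qform_add2 qform_scale1 qform_scale2 of_real_mult
      by (simp only: algebra_simps)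
    then have "Re (qform A w w) = (c * c) * Qz + (c * s) * (Re (qform A z v) + Qvz) + (s * s) * Qv"
      unfolding Qz_def Qv_def Qvz_def by (simp only: rm plus_complex.sel)
    then show ?thesis using \<open>Re (qform A z v) = Qvz\<close> by (simp add: power2_eq_square)
  qed
  have sb: "(\<Sum>k\<in>UNIV. b k) = 1"
    using vs unfolding csphere_def b_def by simp
  have Amod_sum: "(\<Sum>j\<in>UNIV. Amod A \<beta> z $ i $ j * u $ j)
      = (\<Sum>j\<in>UNIV. A $ i $ j * u $ j) + of_real (2 * \<beta> * a i) * u $ i" for i and u :: "complex ^ 'n"
  proof -
    have "(\<Sum>j\<in>UNIV. Amod A \<beta> z $ i $ j * u $ j)
        = (\<Sum>j\<in>UNIV. A $ i $ j * u $ j + (if i = j then of_real (2 * \<beta> * a i) * u $ j else 0))"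
      unfolding Amod_def a_def by (intro sum.cong refl) (simp add: distrib_right)
    also have "\<dots> = (\<Sum>j\<in>UNIV. A $ i $ j * u $ j) + of_real (2 * \<beta> * a i) * u $ i"
      by (simp add: sum.distrib)
    finally show ?thesis .
  qed
  have qf_alt: "qform M x u = (\<Sum>i\<in>UNIV. cnj (x $ i) * (\<Sum>j\<in>UNIV. M $ i $ j * u $ j))" for M x u
    unfolding qform_def by (simp add: sum_distrib_left mult.assoc)
  have Az: "(\<Sum>j\<in>UNIV. A $ i $ j * z $ j) = of_real (2 * la) * z $ i - of_real (2 * \<beta> * a i) * z $ i" for i
    using st Amod_sum[of i z] unfolding stationary_def la_def by (metis add_diff_cancel_right')
  have Qvz: "Qvz = - 2 * \<beta> * Sar"
  proof -
    have "qform A v z = (\<Sum>i\<in>UNIV. of_real (2 * la) * (cnj (v $ i) * z $ i) - of_real (2 * \<beta> * a i) * (cnj (v $ i) * z $ i))"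
      unfolding qf_alt Az by (intro sum.cong refl) (simp add: algebra_simps)
    then have "Qvz = (\<Sum>i\<in>UNIV. 2 * la * Re (cnj (v $ i) * z $ i) - 2 * \<beta> * a i * Re (cnj (v $ i) * z $ i))"
      unfolding Qvz_def by (simp add: Re_sum)
    also have "\<dots> = 2 * la * Re (cinner v z) - 2 * \<beta> * Sar"
    proof -
      have "(\<Sum>i\<in>UNIV. 2 * la * Re (cnj (v $ i) * z $ i) - 2 * \<beta> * a i * Re (cnj (v $ i) * z $ i))
         = (\<Sum>i\<in>UNIV. 2 * la * Re (cnj (v $ i) * z $ i)) - (\<Sum>i\<in>UNIV. 2 * \<beta> * (a i * r i))"
        unfolding r_def by (simp add: sum_subtractf mult_ac)
      then show ?thesis unfolding cinner_def Sar_def by (simp add: Re_sum sum_distrib_left)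
    qed
    also have "Re (cinner v z) = 0" using vt unfolding tangent_def by simp
    finally show ?thesis by simp
  qed
  have Qm: "Re (qform (Amod A \<beta> z) v v) = Qv + 2 * \<beta> * Sab"
  proof -
    have "qform (Amod A \<beta> z) v v = qform A v v + (\<Sum>i\<in>UNIV. of_real (2 * \<beta> * a i) * (cnj (v $ i) * v $ i))"
      unfolding qf_alt Amod_sum by (simp add: distrib_left sum.distrib mult.left_commute)
    moreover have "Re (cnj (v $ i) * v $ i) = b i" for i
      unfolding b_def cmod_power2 by (simp add: power2_eq_square)
    ultimately show ?thesis unfolding Qv_def Sab_def by (simp add: Re_sum mult.assoc sum_distrib_left)
  qed
  have Hfe: "Hf A \<beta> z v = Qv + 2 * \<beta> * Sab - 2 * la + 4 * \<beta> * Srr"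
  proof -
    have "(\<Sum>k\<in>UNIV. (Re (v $ k * cnj (z $ k)))\<^sup>2) = Srr"
      unfolding Srr_def r_def by (intro sum.cong refl) (simp add: power2_eq_square mult.commute)
    then show ?thesis unfolding Hf_def Qm la_def using sb b_def by simp
  qed
  have H3e: "H3 \<beta> z v = \<beta> * (Sbr - Sar)"
    unfolding H3_def Sbr_def Sar_def a_def b_def r_def
    by (simp add: sum_subtractf[symmetric] left_diff_distrib)
  have lae: "la = Qz / 2 + \<beta> * Saa"
    unfolding la_def lam_def Qz_def n4z ..
  have fw: "fobj A \<beta> w = (c^2 * Qz + s^2 * Qv + 2 * c * s * Qvz) / 2 + \<beta> / 2 * norm4_4 w"
    unfolding fobj_def Qw ..
  have fz: "fobj A \<beta> z = Qz / 2 + \<beta> / 2 * Saa" unfolding fobj_def Qz_def n4z ..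
  have fv: "fobj A \<beta> v = Qv / 2 + \<beta> / 2 * Sbb" unfolding fobj_def Qv_def n4v ..
  have H4e: "H4 \<beta> z v = \<beta> * (Sbb - 2 * Sab + Saa - 4 * Srr)"
  proof -
    have "H4 \<beta> z v = \<beta> * (\<Sum>k\<in>UNIV. b k * b k - 2 * (a k * b k) + a k * a k - 4 * (r k * r k))"
      unfolding H4_def by (intro arg_cong[where f="\<lambda>x. \<beta> * x"] sum.cong refl)
        (simp add: a_def b_def r_def power2_eq_square algebra_simps)
    also have "(\<Sum>k\<in>UNIV. b k * b k - 2 * (a k * b k) + a k * a k - 4 * (r k * r k))
        = Sbb - 2 * Sab + Saa - 4 * Srr"
      unfolding Sbb_def Sab_def Saa_def Srr_def by (simp add: sum.distrib sum_subtractf sum_distrib_left)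
    finally show ?thesis .
  qed
  have "fobj A \<beta> (c *\<^sub>R z + s *\<^sub>R v) - fobj A \<beta> z
     = s^2/2 * (c^2 * Hf A \<beta> z v + 4 * c * s * H3 \<beta> z v + 2 * s^2 * (fobj A \<beta> v - fobj A \<beta> z))"
    unfolding w_def[symmetric] fw fz fv Hfe H3e n4w Qvz lae
    using cs by algebra
  moreover have "H4 \<beta> z v = 2 * (fobj A \<beta> v - fobj A \<beta> z) - Hf A \<beta> z v"
    unfolding H4e fz fv Hfe lae by (simp add: algebra_simps)
  ultimately show ?thesis by blast
qed



lemma quad_suff:
  fixes h t d c s :: real
  assumes "h \<ge> 0" "2 * t^2 \<le> h * d" "h = 0 \<longrightarrow> t = 0 \<and> 2 * d - h \<ge> 0"
  shows "c^2 * h + 4 * c * s * t + 2 * s^2 * d \<ge> 0"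
proof (cases "h = 0")
  case True then show ?thesis using assms by simp
next
  case False
  then have hp: "h > 0" using assms by simp
  have "h * (c^2 * h + 4 * c * s * t + 2 * s^2 * d) = (h * c + 2 * t * s)^2 + s^2 * (2 * (h * d) - 4 * t^2)"
    by (simp add: power2_eq_square algebra_simps)
  also have "\<dots> \<ge> 0" using assms(2) by (intro add_nonneg_nonneg mult_nonneg_nonneg) (auto simp: mult.commute)
  finally show ?thesis using hp by (simp add: zero_le_mult_iff)
qed

lemma quad_nec:
  fixes h t d :: real
  assumes q: "\<And>c s. s \<noteq> 0 \<Longrightarrow> c^2 * h + 4 * c * s * t + 2 * s^2 * d \<ge> 0"
  shows "h \<ge> 0 \<and> 2 * t^2 \<le> h * d \<and> (h = 0 \<longrightarrow> t = 0 \<and> 2 * d - h \<ge> 0)"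
proof -
  have d: "d \<ge> 0" using q[of 1 0] by simp
  have h: "h \<ge> 0"
  proof (rule ccontr)
    assume "\<not> h \<ge> 0"
    then have hn: "h < 0" by simp
    define K where "K = 4 * \<bar>t\<bar> + 2 * \<bar>d\<bar>"
    define s where "s = min 1 (- h / (K + 1))"
    have K0: "K \<ge> 0" unfolding K_def by simp
    have s0: "s > 0" unfolding s_def using hn K0 by (simp add: divide_neg_pos)
    have s1: "s \<le> 1" unfolding s_def by simp
    have s2: "s \<le> - h / (K + 1)" unfolding s_def by simp
    have "4 * s * t \<le> s * (4 * \<bar>t\<bar>)" using s0 by (simp add: mult_left_mono abs_ge_self)
    moreover have "2 * s^2 * d \<le> s * (2 * \<bar>d\<bar>)"
    proof -
      have "s^2 * d \<le> s * d" using s0 s1 d by (simp add: power2_eq_square mult_right_mono)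
      then show ?thesis using d by simp
    qed
    moreover have "s * K < - h"
    proof -
      have "s * (K + 1) \<le> (- h / (K + 1)) * (K + 1)" using s2 K0 by (intro mult_right_mono) auto
      also have "\<dots> = - h" using K0 by simp
      finally have "s * (K + 1) \<le> - h" .
      then show ?thesis using s0 by (simp add: algebra_simps)
    qed
    ultimately have "h + 4 * s * t + 2 * s^2 * d < 0" unfolding K_def by (simp add: algebra_simps)
    moreover have "1^2 * h + 4 * 1 * s * t + 2 * s^2 * d \<ge> 0" using q[of s 1] s0 by simp
    ultimately show False by simp
  qed
  show ?thesis
  proof (cases "h = 0")
    case True
    have t: "t = 0"
    proof (rule ccontr)
      assume tn: "t \<noteq> 0"
      have "(- (2 * d + 1) / (4 * t))^2 * h + 4 * (- (2 * d + 1) / (4 * t)) * 1 * t + 2 * 1^2 * d \<ge> 0"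
        by (rule q) simp
      then show False using True tn by (simp add: field_simps)
    qed
    then show ?thesis using True d by simp
  next
    case False
    then have hp: "h > 0" using h by simp
    have "(- 2 * t / h)^2 * h + 4 * (- 2 * t / h) * 1 * t + 2 * 1^2 * d \<ge> 0" by (rule q) simp
    then have "0 \<le> 2 * d - 4 * t^2 / h" using hp by (simp add: field_simps power2_eq_square)
    then have "4 * t^2 / h \<le> 2 * d" by simp
    then have "4 * t^2 \<le> 2 * d * h" using hp by (simp add: pos_divide_le_eq)
    then show ?thesis using h False by (simp add: algebra_simps)
  qed
qed

lemma quad_norm:
  fixes h t d :: real
  assumes q: "\<And>c s. c^2 + s^2 = 1 \<Longrightarrow> s \<noteq> 0 \<Longrightarrow> c^2 * h + 4 * c * s * t + 2 * s^2 * d \<ge> 0"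
    and s: "s \<noteq> 0"
  shows "c^2 * h + 4 * c * s * t + 2 * s^2 * d \<ge> 0"
proof -
  define \<rho> where "\<rho> = sqrt (c^2 + s^2)"
  have pos: "c^2 + s^2 > 0" using s by (simp add: add_nonneg_pos)
  then have r0: "\<rho> > 0" unfolding \<rho>_def by simp
  have r2: "\<rho>^2 = c^2 + s^2" unfolding \<rho>_def using pos by simp
  have "(c/\<rho>)^2 + (s/\<rho>)^2 = 1" using r2 r0 s by (simp add: power_divide add_divide_distrib[symmetric] del: divide_eq_1_iff)
  then have "(c/\<rho>)^2 * h + 4 * (c/\<rho>) * (s/\<rho>) * t + 2 * (s/\<rho>)^2 * d \<ge> 0"
    using s r0 by (intro q) auto
  moreover have "(c/\<rho>)^2 * h + 4 * (c/\<rho>) * (s/\<rho>) * t + 2 * (s/\<rho>)^2 * d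
      = (c^2 * h + 4 * c * s * t + 2 * s^2 * d) / \<rho>^2"
    using r0 by (simp add: field_simps power2_eq_square)
  ultimately show ?thesis using r0 by (simp add: zero_le_divide_iff)
qed

lemma comp_comb: "(c *\<^sub>R z + s *\<^sub>R v) $ k = of_real c * z $ k + of_real s * v $ k"
  for z v :: "complex ^ 'n"
  unfolding vector_add_component vector_scaleR_component scaleR_conv_of_real[where 'a=complex] ..

lemma sum_r_zero:
  assumes "v \<in> tangent z" shows "(\<Sum>k\<in>UNIV. Re (cnj (z $ k) * v $ k)) = 0"
proof -
  have "(\<Sum>k\<in>UNIV. Re (cnj (z $ k) * v $ k)) = Re (cinner v z)"
    unfolding cinner_def Re_sum by (intro sum.cong refl) (simp add: mult.commute)
  then show ?thesis using assms unfolding tangent_def by simp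
qed

lemma sphere_comb:
  fixes z v :: "complex ^ 'n"
  assumes "z \<in> csphere" "v \<in> csphere" "v \<in> tangent z" "c^2 + s^2 = 1"
  shows "c *\<^sub>R z + s *\<^sub>R v \<in> csphere"
proof -
  have "(\<Sum>k\<in>UNIV. (cmod ((c *\<^sub>R z + s *\<^sub>R v) $ k))^2)
      = (\<Sum>k\<in>UNIV. c^2 * (cmod (z $ k))^2 + s^2 * (cmod (v $ k))^2 + 2 * c * s * Re (cnj (z $ k) * v $ k))"
    unfolding comp_comb by (intro sum.cong refl cmod_comb)
  also have "\<dots> = c^2 * (\<Sum>k\<in>UNIV. (cmod (z $ k))^2) + s^2 * (\<Sum>k\<in>UNIV. (cmod (v $ k))^2)
      + 2 * c * s * (\<Sum>k\<in>UNIV. Re (cnj (z $ k) * v $ k))"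
    by (simp only: sum.distrib sum_distrib_left)
  also have "\<dots> = 1" using assms sum_r_zero[OF assms(3)] unfolding csphere_def by simp
  finally show ?thesis unfolding csphere_def by simp
qed

lemma decomp:
  fixes z w :: "complex ^ 'n"
  assumes z: "z \<in> csphere" and w: "w \<in> csphere"
  shows "\<exists>c s v. c^2 + s^2 = 1 \<and> v \<in> tangent z \<and> v \<in> csphere \<and> w = c *\<^sub>R z + s *\<^sub>R v"
proof -
  define c where "c = Re (cinner w z)"
  define u where "u = 1 *\<^sub>R w + (- c) *\<^sub>R z"
  have cw: "c = (\<Sum>k\<in>UNIV. Re (cnj (w $ k) * z $ k))" unfolding c_def cinner_def Re_sum ..
  have sz: "(\<Sum>k\<in>UNIV. (cmod (z $ k))^2) = 1" using z unfolding csphere_def by simp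
  have sw: "(\<Sum>k\<in>UNIV. (cmod (w $ k))^2) = 1" using w unfolding csphere_def by simp
  have su: "(\<Sum>k\<in>UNIV. (cmod (u $ k))^2) = 1 - c^2"
  proof -
    have "(\<Sum>k\<in>UNIV. (cmod (u $ k))^2)
      = (\<Sum>k\<in>UNIV. 1^2 * (cmod (w $ k))^2 + (-c)^2 * (cmod (z $ k))^2 + 2 * 1 * (-c) * Re (cnj (w $ k) * z $ k))"
      unfolding u_def comp_comb by (intro sum.cong refl cmod_comb)
    also have "\<dots> = (\<Sum>k\<in>UNIV. (cmod (w $ k))^2) + c^2 * (\<Sum>k\<in>UNIV. (cmod (z $ k))^2)
      - 2 * c * (\<Sum>k\<in>UNIV. Re (cnj (w $ k) * z $ k))"
    proof -
      have "(\<Sum>k\<in>UNIV. 1^2 * (cmod (w $ k))^2 + (-c)^2 * (cmod (z $ k))^2 + 2 * 1 * (-c) * Re (cnj (w $ k) * z $ k))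
        = (\<Sum>k\<in>UNIV. (cmod (w $ k))^2 + c^2 * (cmod (z $ k))^2 - 2 * c * Re (cnj (w $ k) * z $ k))"
        by (intro sum.cong refl) simp
      then show ?thesis by (simp only: sum.distrib sum_distrib_left sum_subtractf)
    qed
    also have "\<dots> = 1 - c^2" unfolding sw sz cw[symmetric] by (simp add: power2_eq_square)
    finally show ?thesis .
  qed
  have ut: "Re (cinner u z) = 0"
  proof -
    have "Re (cinner u z) = (\<Sum>k\<in>UNIV. Re (cnj (w $ k) * z $ k)) - c * (\<Sum>k\<in>UNIV. (cmod (z $ k))^2)"
    proof -
      have "Re (cinner u z) = (\<Sum>k\<in>UNIV. Re (cnj (w $ k) * z $ k) - c * (cmod (z $ k))^2)"
        unfolding cinner_def Re_sum u_def comp_comb cmod_power2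
        by (intro sum.cong refl) (simp add: algebra_simps power2_eq_square)
      then show ?thesis by (simp only: sum_subtractf sum_distrib_left)
    qed
    then show ?thesis using sz cw by simp
  qed
  have wu: "w = c *\<^sub>R z + u" unfolding u_def by simp
  show ?thesis
  proof (cases "(\<Sum>k\<in>UNIV. (cmod (u $ k))^2) = 0")
    case True
    then have "\<forall>k\<in>UNIV. (cmod (u $ k))^2 = 0" by (subst sum_nonneg_eq_0_iff[symmetric]) auto
    then have "u = 0" by (simp add: vec_eq_iff)
    define v where "v = (\<chi> k. \<i> * z $ k)"
    have "v \<in> tangent z" unfolding tangent_def cinner_def v_def by (simp add: Re_sum)
    moreover have "v \<in> csphere" using z unfolding csphere_def v_def by (simp add: norm_mult)
    moreover have "c^2 + 0^2 = 1" using su True by simp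
    ultimately show ?thesis using wu \<open>u = 0\<close> by (intro exI[of _ c] exI[of _ 0] exI[of _ v]) simp
  next
    case False
    define s where "s = sqrt (1 - c^2)"
    have pos: "1 - c^2 > 0" using False su sum_nonneg[of UNIV "\<lambda>k. (cmod (u $ k))^2"] by simp
    then have s0: "s > 0" unfolding s_def by simp
    have s2: "s^2 = 1 - c^2" unfolding s_def using pos by simp
    define v where "v = (1 / s) *\<^sub>R u"
    have vk: "v $ k = of_real (1/s) * u $ k" for k unfolding v_def by (simp add: scaleR_conv_of_real[where 'a=complex])
    have "v \<in> tangent z"
    proof -
      have "cinner v z = of_real (1/s) * cinner u z" unfolding cinner_def vk by (simp add: sum_distrib_left mult.assoc)
      then show ?thesis unfolding tangent_def using ut by simp
    qed
    moreover have "v \<in> csphere"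
    proof -
      have "(\<Sum>k\<in>UNIV. (cmod (v $ k))^2) = (1/s)^2 * (\<Sum>k\<in>UNIV. (cmod (u $ k))^2)"
        unfolding vk sum_distrib_left by (intro sum.cong refl) (use s0 in \<open>simp add: norm_divide power_divide\<close>)
      also have "\<dots> = 1" using su s2 s0 pos by (simp add: power_divide)
      finally show ?thesis unfolding csphere_def by simp
    qed
    moreover have "w = c *\<^sub>R z + s *\<^sub>R v" unfolding wu v_def using s0 by simp
    ultimately show ?thesis using s2 by (intro exI[of _ c] exI[of _ s] exI[of _ v]) simp
  qed
qed

theorem theorem3:
  fixes A :: "complex ^ 'n ^ 'n" and \<beta> :: real and z :: "complex ^ 'n"
  assumes "hermitian A" and "\<beta> > 0" and "stationary A \<beta> z"
  shows "global_min_on_sphere A \<beta> z \<longleftrightarrow>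
    ((\<forall>v \<in> tangent z \<inter> csphere.
        Hf A \<beta> z v \<ge> 0 \<and>
        2 * (H3 \<beta> z v)\<^sup>2 \<le> Hf A \<beta> z v * (fobj A \<beta> v - fobj A \<beta> z)) \<and>
     (\<forall>v \<in> tangent z \<inter> csphere. Hf A \<beta> z v = 0 \<longrightarrow>
        H3 \<beta> z v = 0 \<and> H4 \<beta> z v \<ge> 0))"
proof -
  have zs: "z \<in> csphere" using assms(3) unfolding stationary_def by simp
  have K1: "fobj A \<beta> (c *\<^sub>R z + s *\<^sub>R v) - fobj A \<beta> z
     = s^2/2 * (c^2 * Hf A \<beta> z v + 4 * c * s * H3 \<beta> z v + 2 * s^2 * (fobj A \<beta> v - fobj A \<beta> z))"
    if "v \<in> tangent z" "v \<in> csphere" "c^2 + s^2 = 1" for v c s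
    using key[OF assms(1,3) that] by blast
  have K2: "H4 \<beta> z v = 2 * (fobj A \<beta> v - fobj A \<beta> z) - Hf A \<beta> z v"
    if "v \<in> tangent z" "v \<in> csphere" for v
    using key[OF assms(1,3) that, of 1 0] by simp
  show ?thesis
  proof
    assume gm: "global_min_on_sphere A \<beta> z"
    have P: "Hf A \<beta> z v \<ge> 0 \<and> 2 * (H3 \<beta> z v)\<^sup>2 \<le> Hf A \<beta> z v * (fobj A \<beta> v - fobj A \<beta> z)
      \<and> (Hf A \<beta> z v = 0 \<longrightarrow> H3 \<beta> z v = 0 \<and> 2 * (fobj A \<beta> v - fobj A \<beta> z) - Hf A \<beta> z v \<ge> 0)"
      if vt: "v \<in> tangent z" and vs: "v \<in> csphere" for v
    proof (rule quad_nec)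
      fix c s :: real assume s00: "s \<noteq> 0"
      show "c^2 * Hf A \<beta> z v + 4 * c * s * H3 \<beta> z v + 2 * s^2 * (fobj A \<beta> v - fobj A \<beta> z) \<ge> 0"
      proof (rule quad_norm[OF _ s00])
        fix c s :: real assume cs: "c^2 + s^2 = 1" and s0: "s \<noteq> 0"
        have "c *\<^sub>R z + s *\<^sub>R v \<in> csphere" by (rule sphere_comb[OF zs vs vt cs])
        then have "fobj A \<beta> (c *\<^sub>R z + s *\<^sub>R v) - fobj A \<beta> z \<ge> 0"
          using gm unfolding global_min_on_sphere_def by simp
        then have "s^2/2 * (c^2 * Hf A \<beta> z v + 4 * c * s * H3 \<beta> z v + 2 * s^2 * (fobj A \<beta> v - fobj A \<beta> z)) \<ge> 0"
          using K1[OF vt vs cs] by simp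
        moreover have "s^2/2 > 0" using s0 by simp
        ultimately show "c^2 * Hf A \<beta> z v + 4 * c * s * H3 \<beta> z v + 2 * s^2 * (fobj A \<beta> v - fobj A \<beta> z) \<ge> 0"
          by (simp add: zero_le_mult_iff)
      qed
    qed
    show "(\<forall>v \<in> tangent z \<inter> csphere.
        Hf A \<beta> z v \<ge> 0 \<and>
        2 * (H3 \<beta> z v)\<^sup>2 \<le> Hf A \<beta> z v * (fobj A \<beta> v - fobj A \<beta> z)) \<and>
     (\<forall>v \<in> tangent z \<inter> csphere. Hf A \<beta> z v = 0 \<longrightarrow>
        H3 \<beta> z v = 0 \<and> H4 \<beta> z v \<ge> 0)"
      using P K2 by simp
  next
    assume C: "(\<forall>v \<in> tangent z \<inter> csphere.
        Hf A \<beta> z v \<ge> 0 \<and>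
        2 * (H3 \<beta> z v)\<^sup>2 \<le> Hf A \<beta> z v * (fobj A \<beta> v - fobj A \<beta> z)) \<and>
     (\<forall>v \<in> tangent z \<inter> csphere. Hf A \<beta> z v = 0 \<longrightarrow>
        H3 \<beta> z v = 0 \<and> H4 \<beta> z v \<ge> 0)"
    have "fobj A \<beta> z \<le> fobj A \<beta> w" if ws: "w \<in> csphere" for w
    proof -
      obtain c s v where cs: "c^2 + s^2 = 1" and vt: "v \<in> tangent z" and vs: "v \<in> csphere"
        and wd: "w = c *\<^sub>R z + s *\<^sub>R v"
        using decomp[OF zs ws] by blast
      have "c^2 * Hf A \<beta> z v + 4 * c * s * H3 \<beta> z v + 2 * s^2 * (fobj A \<beta> v - fobj A \<beta> z) \<ge> 0"
        using C K2[OF vt vs] vt vs by (intro quad_suff) auto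
      then have "fobj A \<beta> w - fobj A \<beta> z \<ge> 0" unfolding wd K1[OF vt vs cs] by simp
      then show ?thesis by simp
    qed
    then show "global_min_on_sphere A \<beta> z" unfolding global_min_on_sphere_def using zs by blast
  qed
qed

end
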